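(* In the setting below, assume $\|\nabla f_i(x)\|\le G_i$ for all $x$ and $i$, and run the method for all epochs $k\in\mathbb N$ with arbitrary permutations. Suppose (1) $\eta_k=r_k\tilde\eta_k$ for all $k\in\mathbb N$, where $r_k=r\vee\max_{\ell\in[k]}\|x_\ell-x_1\|$ for some $r>0$ and $(\tilde\eta_k)_{k\in\mathbb N}$ is a positive sequence; and (2) $\sum_{k=1}^\infty6\bar G^2n^2\tilde\eta_k^2\le c^2$ for some constant $0<c<1$. Then $$\|x_k-x_1\|\le\frac2{1-c}\|x_*-x_1\|+\frac c{1-c}r\quad\text{for all }k\in\mathbb N.$$
   Context: Setting. Let $n,d\in\mathbb N$, let $f_1,\dots,f_n:\mathbb R^d\to\mathbb R$ be convex, $f=\frac1n\sum_{i=1}^nf_i$, let $\psi:\mathbb R^d\to\mathbb R\cup\{+\infty\}$ be proper, closed and convex, and $F=f+\psi$. For a convex function $g$, $\nabla g(x)$ denotes an element of $\partial g(x)$ (for each $f_i$ a fixed selection of subgradients, the same one used in the algorithm). Assume there is $x_*\in\mathbb R^d$ with $F(x_* )=\inf_{x}F(x)\in\mathbb R$. Proximal shuffling gradient method: given $x_1\in\mathrm{dom}\,\psi$ and stepsizes $\eta_k>0$, for each epoch $k$: choose a permutation $\sigma_k=(\sigma_k^1,\dots,\sigma_k^n)$ of $[n]=\{1,\dots,n\}$; set $x_k^1=x_k$ and $x_k^{i+1}=x_k^i-\eta_k\nabla f_{\sigma_k^i}(x_k^i)$ for $i=1,\dots,n$; set $x_{k+1}=\arg\min_{x\in\mathbb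 R^d}\{n\psi(x)+\frac{1}{2\eta_k}\|x-x_k^{n+1}\|^2\}$. $a\vee b=\max\{a,b\}$. Lipschitz condition: constants $G_i>0$ with $\|\nabla f_i(x)\|\le G_i$ for all $x\in\mathbb R^d$, $i\in[n]$ (for every subgradient); $\bar G=\frac1n\sum_{i=1}^nG_i$. *)

theory Defs
  imports "HOL-Analysis.Analysis"
begin

definition is_subgrad :: "('a::euclidean_space \<Rightarrow> real) \<Rightarrow> 'a \<Rightarrow> 'a \<Rightarrow> bool" where
  "is_subgrad h x v \<longleftrightarrow> (\<forall>y. h y \<ge> h x + v \<bullet> (y - x))"

text \<open>Inner iterates of one epoch: epoch_pt g eta s x i is x_k^(i+1) when x = x_k,
  eta = eta_k, s = sigma_k; the component used at inner step i+1 is g (s (i+1)).\<close>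
fun epoch_pt :: "(nat \<Rightarrow> 'a::real_vector \<Rightarrow> 'a) \<Rightarrow> real \<Rightarrow> (nat \<Rightarrow> nat) \<Rightarrow> 'a \<Rightarrow> nat \<Rightarrow> 'a" where
  "epoch_pt g eta s x 0 = x"
| "epoch_pt g eta s x (Suc i) =
     epoch_pt g eta s x i - eta *\<^sub>R g (s (Suc i)) (epoch_pt g eta s x i)"

end

theory Submission imports Defs begin

lemma le_from_small:
  fixes A B C :: real
  assumes h: "\<And>t. 0 < t \<Longrightarrow> t \<le> 1 \<Longrightarrow> A \<le> B + t * C" and C: "C \<ge> 0"
  shows "A \<le> B"
proof (rule ccontr)
  assume "\<not> A \<le> B"
  hence AB: "A - B > 0" by simp
  define t where "t = min 1 ((A - B) / (2 * (C + 1)))"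
  have t0: "t > 0" using AB C by (simp add: t_def)
  have t1: "t \<le> 1" by (simp add: t_def)
  have "t * C \<le> (A - B) / (2 * (C + 1)) * C"
    using C by (intro mult_right_mono) (auto simp: t_def)
  also have "\<dots> < A - B"
    using AB C mult_strict_right_mono[of B A "C + 2"] by (simp add: field_simps)
  finally show False using h[OF t0 t1] by simp
qed

lemma prox_opt:
  fixes p y z :: "'a::euclidean_space"
  assumes D: "convex D" and ps: "convex_on D psi" and p: "p \<in> D" and y: "y \<in> D"
    and eta: "eta > 0" and m: "m \<ge> 0"
    and mn: "\<forall>w\<in>D. m * psi p + (1/(2*eta)) * (norm (p - z))^2 \<le> m * psi w + (1/(2*eta)) * (norm (w - z))^2"
  shows "m * (psi p - psi y) \<le> (1/eta) * inner (p - z) (y - p)"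
proof (rule le_from_small[where C = "(norm (y - p))^2 / (2*eta)"])
  fix t :: real assume t0: "0 < t" and t1: "t \<le> 1"
  define w where "w = (1 - t) *\<^sub>R p + t *\<^sub>R y"
  have wD: "w \<in> D" using D p y t0 t1 unfolding w_def by (simp add: convexD)
  have cv: "psi w \<le> (1 - t) * psi p + t * psi y"
    using convex_onD[OF ps, of t p y] t0 t1 p y by (simp add: w_def)
  have wz: "w - z = (p - z) + t *\<^sub>R (y - p)" unfolding w_def by (simp add: algebra_simps)
  have nw: "(norm (w - z))^2 = (norm (p - z))^2 + 2 * t * inner (p - z) (y - p) + t^2 * (norm (y - p))^2"
    unfolding wz power2_norm_eq_inner by (simp add: inner_add inner_commute power2_eq_square algebra_simps)
  have "m * psi p + (1/(2*eta)) * (norm (p - z))^2 \<le> m * psi w + (1/(2*eta)) * (norm (w - z))^2"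
    using mn wD by blast
  also have "\<dots> \<le> m * ((1 - t) * psi p + t * psi y) + (1/(2*eta)) * (norm (w - z))^2"
    using cv m by (simp add: mult_left_mono)
  finally have E: "m * psi p + (1/(2*eta)) * (norm (p - z))^2 \<le> m * ((1 - t) * psi p + t * psi y) + (1/(2*eta)) * ((norm (p - z))^2 + 2 * t * inner (p - z) (y - p) + t^2 * (norm (y - p))^2)"
    unfolding nw .
  have "t * (m * (psi p - psi y)) \<le> (1/(2*eta)) * (2 * t * inner (p - z) (y - p) + t^2 * (norm (y - p))^2)"
    using E by (simp add: algebra_simps)
  also have "\<dots> = t * ((1/eta) * inner (p - z) (y - p) + t * ((norm (y - p))^2 / (2*eta)))"
    using eta by (simp add: field_simps power2_eq_square)
  finally have "t * (m * (psi p - psi y)) \<le> t * ((1/eta) * inner (p - z) (y - p) + t * ((norm (y - p))^2 / (2*eta)))" .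
  thus "m * (psi p - psi y) \<le> (1/eta) * inner (p - z) (y - p) + t * ((norm (y - p))^2 / (2*eta))"
    using t0 by simp
next
  show "0 \<le> (norm (y - p))^2 / (2*eta)" using eta by simp
qed

lemma tri_sum:
  fixes a :: "nat \<Rightarrow> real"
  shows "\<forall>i<m. a i \<ge> 0 \<Longrightarrow> (\<Sum>i<m. a i * (\<Sum>j<i. a j)) \<le> (\<Sum>i<m. a i)^2 / 2"
proof (induction m)
  case 0 then show ?case by simp
next
  case (Suc m)
  have "(\<Sum>i<Suc m. a i * (\<Sum>j<i. a j)) \<le> (\<Sum>i<m. a i)^2 / 2 + a m * (\<Sum>j<m. a j)"
    using Suc by simp
  also have "\<dots> \<le> (\<Sum>i<Suc m. a i)^2 / 2"
    using Suc.prems by (simp add: power2_eq_square algebra_simps)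
  finally show ?case .
qed

lemma epoch_pt_sum:
  "epoch_pt g eta s x m = x - eta *\<^sub>R (\<Sum>i<m. g (s (Suc i)) (epoch_pt g eta s x i))"
  by (induction m) (simp_all add: algebra_simps)

lemma epoch_pt_dist:
  fixes x :: "'a::real_normed_vector"
  assumes "\<forall>i<m. norm (g (s (Suc i)) (epoch_pt g eta s x i)) \<le> Gs i" "eta \<ge> 0"
  shows "norm (epoch_pt g eta s x m - x) \<le> eta * (\<Sum>i<m. Gs i)"
  using assms
proof (induction m)
  case 0 then show ?case by simp
next
  case (Suc m)
  have IH: "norm (epoch_pt g eta s x m - x) \<le> eta * (\<Sum>i<m. Gs i)" using Suc by simp
  have b: "norm (eta *\<^sub>R g (s (Suc m)) (epoch_pt g eta s x m)) \<le> eta * Gs m"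
    using Suc.prems by (simp add: mult_left_mono)
  have "norm (epoch_pt g eta s x (Suc m) - x)
      = norm ((epoch_pt g eta s x m - x) - eta *\<^sub>R g (s (Suc m)) (epoch_pt g eta s x m))"
    by (simp add: algebra_simps)
  also have "\<dots> \<le> norm (epoch_pt g eta s x m - x) + norm (eta *\<^sub>R g (s (Suc m)) (epoch_pt g eta s x m))"
    by (rule norm_triangle_ineq4)
  also have "\<dots> \<le> eta * (\<Sum>i<Suc m. Gs i)" using IH b by (simp add: algebra_simps)
  finally show ?case .
qed

lemma epoch_ineq:
  fixes x p y :: "'a::euclidean_space" and n :: nat
  assumes sub: "\<forall>i\<in>{1..n}. \<forall>v. is_subgrad (fs i) v (g i v)"
    and Gb: "\<forall>i\<in>{1..n}. \<forall>v w. is_subgrad (fs i) v w \<longrightarrow> norm w \<le> G i"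
    and Gpos: "\<forall>i\<in>{1..n}. G i > 0"
    and sp: "s permutes {1..n}" and eta: "eta > 0"
    and prox: "real n * (psi p - psi y) \<le> (1/eta) * inner (p - epoch_pt g eta s x n) (y - p)"
  shows "(norm (y - p))^2 \<le> (norm (y - x))^2 + 6 * eta^2 * (\<Sum>i=1..n. G i)^2
     - 2*eta*((\<Sum>i=1..n. fs i p) + real n * psi p - (\<Sum>i=1..n. fs i y) - real n * psi y)"
proof -
  define z where "z i = epoch_pt g eta s x i" for i
  define a where "a i = g (s (Suc i)) (z i)" for i
  define Gs where "Gs i = G (s (Suc i))" for i
  define S where "S = (\<Sum>i=1..n. G i)"
  define d where "d = norm (p - x)"
  define T where "T i = (\<Sum>j<i. Gs j)" for i
  define Fp where "Fp = (\<Sum>i=1..n. fs i p)"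
  define Fy where "Fy = (\<Sum>i=1..n. fs i y)"
  have sidx: "s (Suc i) \<in> {1..n}" if "i < n" for i
    using that permutes_in_image[OF sp] by simp
  have Gs0: "\<forall>i<n. Gs i \<ge> 0"
    using sidx Gpos by (auto simp: Gs_def intro: less_imp_le)
  have reidx: "(\<Sum>i<n. h (s (Suc i))) = (\<Sum>i=1..n. h i)" for h :: "nat \<Rightarrow> real"
  proof -
    have "(\<Sum>i<n. h (s (Suc i))) = (\<Sum>i=1..n. h (s i))"
      by (rule sum_bounds_lt_plus1)
    also have "\<dots> = (\<Sum>i=1..n. h i)"
      using sum.permute[OF sp, of h] by (simp add: comp_def)
    finally show ?thesis .
  qed
  have SGs: "(\<Sum>i<n. Gs i) = S" unfolding Gs_def S_def by (rule reidx)
  have an: "norm (a i) \<le> Gs i" if "i < n" for i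
    using Gb sub sidx[OF that] unfolding a_def Gs_def by blast
  have zdist: "norm (z i - x) \<le> eta * T i" if "i \<le> n" for i
    unfolding z_def T_def
    by (rule epoch_pt_dist) (use an that eta in \<open>auto simp: a_def z_def\<close>)
  have zn: "z n = x - eta *\<^sub>R (\<Sum>i<n. a i)"
    unfolding z_def a_def by (rule epoch_pt_sum)
  have per: "inner (a i) (y - p) \<le> fs (s (Suc i)) y - fs (s (Suc i)) p + 2 * (Gs i * (eta * T i) + Gs i * d)"
    if i: "i < n" for i
  proof -
    let ?j = "s (Suc i)"
    have s1: "fs ?j y \<ge> fs ?j (z i) + inner (a i) (y - z i)"
      using sub sidx[OF i] unfolding a_def is_subgrad_def by blast
    have s2: "fs ?j (z i) \<ge> fs ?j p + inner (g ?j p) (z i - p)"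
      using sub sidx[OF i] unfolding is_subgrad_def by blast
    have gb: "norm (g ?j p) \<le> Gs i" using Gb sub sidx[OF i] unfolding Gs_def by blast
    have nz: "norm (z i - p) \<le> eta * T i + d"
    proof -
      have "norm (z i - p) \<le> norm (z i - x) + norm (p - x)"
        using norm_triangle_ineq4[of "z i - x" "p - x"] by simp
      thus ?thesis using zdist[of i] i d_def by simp
    qed
    have c1: "- inner (g ?j p) (z i - p) \<le> Gs i * (eta * T i + d)"
    proof -
      have "- inner (g ?j p) (z i - p) \<le> norm (g ?j p) * norm (z i - p)"
        using norm_cauchy_schwarz[of "- g ?j p" "z i - p"] by simp
      also have "\<dots> \<le> Gs i * (eta * T i + d)"
        using gb nz Gs0 i by (intro mult_mono) auto
      finally show ?thesis .
    qed
    have c2: "inner (a i) (z i - p) \<le> Gs i * (eta * T i + d)"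
    proof -
      have "inner (a i) (z i - p) \<le> norm (a i) * norm (z i - p)"
        using norm_cauchy_schwarz by blast
      also have "\<dots> \<le> Gs i * (eta * T i + d)"
        using an[OF i] nz Gs0 i by (intro mult_mono) auto
      finally show ?thesis .
    qed
    have "inner (a i) (y - p) = inner (a i) (y - z i) + inner (a i) (z i - p)"
      by (simp add: inner_diff_right)
    thus ?thesis using s1 s2 c1 c2 by (simp add: algebra_simps)
  qed
  have sumin: "inner (\<Sum>i<n. a i) (y - p) \<le> Fy - Fp + 2 * (eta * (\<Sum>i<n. Gs i * T i) + S * d)"
  proof -
    have "inner (\<Sum>i<n. a i) (y - p) = (\<Sum>i<n. inner (a i) (y - p))"
      by (simp add: inner_sum_left)
    also have "\<dots> \<le> (\<Sum>i<n. fs (s (Suc i)) y - fs (s (Suc i)) p + 2 * (Gs i * (eta * T i) + Gs i * d))"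
      by (rule sum_mono) (use per in auto)
    also have "\<dots> = (\<Sum>i<n. fs (s (Suc i)) y) - (\<Sum>i<n. fs (s (Suc i)) p)
        + 2 * (eta * (\<Sum>i<n. Gs i * T i) + (\<Sum>i<n. Gs i) * d)"
      by (simp add: sum.distrib sum_subtractf sum_distrib_left sum_distrib_right algebra_simps)
    also have "\<dots> = Fy - Fp + 2 * (eta * (\<Sum>i<n. Gs i * T i) + S * d)"
      using reidx[of "\<lambda>i. fs i y"] reidx[of "\<lambda>i. fs i p"] SGs by (simp add: Fy_def Fp_def)
    finally show ?thesis .
  qed
  have tri: "(\<Sum>i<n. Gs i * T i) \<le> S^2 / 2"
    using tri_sum[of n Gs] Gs0 SGs unfolding T_def by simp
  have pz: "p - z n = (p - x) + eta *\<^sub>R (\<Sum>i<n. a i)" using zn by simp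
  have ip: "inner (p - z n) (y - p) = inner (p - x) (y - p) + eta * inner (\<Sum>i<n. a i) (y - p)"
    unfolding pz by (simp add: inner_add_left)
  have pyth: "2 * inner (p - x) (y - p) = (norm (y - x))^2 - d^2 - (norm (y - p))^2"
  proof -
    have "y - x = (y - p) + (p - x)" by simp
    hence "(norm (y - x))^2 = (norm (y - p))^2 + 2 * inner (p - x) (y - p) + (norm (p - x))^2"
      by (simp add: power2_norm_eq_inner inner_add_left inner_add_right inner_commute algebra_simps)
    thus ?thesis by (simp add: d_def)
  qed
  have main: "real n * (psi p - psi y) \<le> (1/eta) * inner (p - x) (y - p) + inner (\<Sum>i<n. a i) (y - p)"
    using prox unfolding z_def[symmetric] ip using eta by (simp add: field_simps)
  have main2: "2 * eta * (real n * (psi p - psi y)) \<le> 2 * inner (p - x) (y - p) + 2 * eta * inner (\<Sum>i<n. a i) (y - p)"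
  proof -
    have "2 * eta * (real n * (psi p - psi y)) \<le> 2 * eta * ((1/eta) * inner (p - x) (y - p) + inner (\<Sum>i<n. a i) (y - p))"
      using main eta by (intro mult_left_mono) auto
    moreover have "2 * eta * ((1/eta) * inner (p - x) (y - p) + inner (\<Sum>i<n. a i) (y - p))
       = 2 * inner (p - x) (y - p) + 2 * eta * inner (\<Sum>i<n. a i) (y - p)"
      using eta by (simp add: field_simps)
    ultimately show ?thesis by simp
  qed
  have e1: "2 * eta * inner (\<Sum>i<n. a i) (y - p) \<le> 2 * eta * (Fy - Fp) + 2 * eta^2 * S^2 + 4 * eta * S * d"
  proof -
    have "2 * eta * inner (\<Sum>i<n. a i) (y - p) \<le> 2 * eta * (Fy - Fp + 2 * (eta * (S^2/2) + S * d))"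
    proof -
      have "eta * (\<Sum>i<n. Gs i * T i) \<le> eta * (S^2/2)" using tri eta by (intro mult_left_mono) auto
      have "inner (\<Sum>i<n. a i) (y - p) \<le> Fy - Fp + 2 * (eta * (S^2/2) + S * d)" by (rule order_trans[OF sumin]) (use \<open>eta * (\<Sum>i<n. Gs i * T i) \<le> eta * (S^2/2)\<close> in simp)
      thus ?thesis using eta by (intro mult_left_mono) auto
    qed
    thus ?thesis by (simp add: algebra_simps power2_eq_square)
  qed
  have e2: "4 * eta * S * d \<le> 4 * eta^2 * S^2 + d^2"
  proof -
    have "0 \<le> (2 * eta * S - d)^2" by simp
    thus ?thesis by (simp add: power2_eq_square algebra_simps)
  qed
  show ?thesis
    using main2 e1 e2 pyth unfolding S_def[symmetric] Fp_def[symmetric] Fy_def[symmetric]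
    by (simp add: algebra_simps)
qed

theorem mainTheorem12:
  fixes n :: nat
    and fs :: "nat \<Rightarrow> 'a::euclidean_space \<Rightarrow> real"
    and g :: "nat \<Rightarrow> 'a \<Rightarrow> 'a"
    and psi :: "'a \<Rightarrow> real" and D :: "'a set"
    and G :: "nat \<Rightarrow> real"
    and x :: "nat \<Rightarrow> 'a" and xstar :: 'a
    and sigma :: "nat \<Rightarrow> nat \<Rightarrow> nat"
    and eta eta_t :: "nat \<Rightarrow> real"
    and r c :: real
  assumes n_pos: "n \<ge> 1"
    and fs_convex: "\<forall>i\<in>{1..n}. convex_on UNIV (fs i)"
    and g_subgrad: "\<forall>i\<in>{1..n}. \<forall>y. is_subgrad (fs i) y (g i y)"
    and psi_proper: "D \<noteq> {}"
    and psi_convex: "convex D" "convex_on D psi"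
    and psi_closed: "closed {(y, t). y \<in> D \<and> psi y \<le> t}"
    and xstar_min: "xstar \<in> D"
      "\<forall>y\<in>D. (\<Sum>i=1..n. fs i xstar) / real n + psi xstar
               \<le> (\<Sum>i=1..n. fs i y) / real n + psi y"
    and G_pos: "\<forall>i\<in>{1..n}. G i > 0"
    and G_bound: "\<forall>i\<in>{1..n}. \<forall>y v. is_subgrad (fs i) y v \<longrightarrow> norm v \<le> G i"
    and x1_dom: "x 1 \<in> D"
    and sigma_perm: "\<forall>k\<ge>1. sigma k permutes {1..n}"
    and eta_pos: "\<forall>k\<ge>1. eta k > 0"
    and prox_step: "\<forall>k\<ge>1. x (Suc k) \<in> D \<and>
        (\<forall>y\<in>D. real n * psi (x (Suc k))
                 + (1 / (2 * eta k)) * (norm (x (Suc k) - epoch_pt g (eta k) (sigma k) (x k) n))\<^sup>2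
               \<le> real n * psi y
                 + (1 / (2 * eta k)) * (norm (y - epoch_pt g (eta k) (sigma k) (x k) n))\<^sup>2)"
    and r_pos: "r > 0"
    and eta_t_pos: "\<forall>k\<ge>1. eta_t k > 0"
    and eta_def: "\<forall>k\<ge>1. eta k = max r (Max ((\<lambda>l. norm (x l - x 1)) ` {1..k})) * eta_t k"
    and c_bounds: "0 < c" "c < 1"
    and eta_t_sum: "summable (\<lambda>k. 6 * ((\<Sum>i=1..n. G i) / real n)\<^sup>2 * (real n)\<^sup>2 * (eta_t (Suc k))\<^sup>2)"
      "(\<Sum>k. 6 * ((\<Sum>i=1..n. G i) / real n)\<^sup>2 * (real n)\<^sup>2 * (eta_t (Suc k))\<^sup>2) \<le> c\<^sup>2"
  shows "\<forall>k\<ge>1. norm (x k - x 1) \<le> 2 / (1 - c) * norm (xstar - x 1) + c / (1 - c) * r"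
proof -
  define S where "S = (\<Sum>i=1..n. G i)"
  define D0 where "D0 = norm (xstar - x 1)"
  define B where "B = 2 / (1 - c) * D0 + c / (1 - c) * r"
  define Bm where "Bm = max r B"
  define a where "a k = 6 * ((\<Sum>i=1..n. G i) / real n)\<^sup>2 * (real n)\<^sup>2 * (eta_t (Suc k))\<^sup>2" for k
  have nr: "real n > 0" using n_pos by simp
  have SS: "(S / real n)^2 * (real n)^2 = S^2" using nr by (simp add: power_divide)
  have a_eq: "a k = 6 * S^2 * (eta_t (Suc k))^2" for k
  proof -
    have "a k = 6 * ((S / real n)^2 * (real n)^2) * (eta_t (Suc k))^2"
      unfolding a_def S_def by (simp only: mult.assoc)
    thus ?thesis unfolding SS .
  qed
  have a0: "a k \<ge> 0" for k unfolding a_eq by simp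
  have asum: "(\<Sum>l<m. a l) \<le> c^2" for m
  proof -
    have "(\<Sum>l<m. a l) \<le> suminf a"
      using eta_t_sum(1) a0 unfolding a_def[abs_def] by (intro sum_le_suminf) auto
    thus ?thesis using eta_t_sum(2) unfolding a_def[abs_def] by simp
  qed
  have D00: "D0 \<ge> 0" unfolding D0_def by simp
  have B': "B = (2 * D0 + c * r) / (1 - c)" unfolding B_def by (simp add: add_divide_distrib)
  have hB: "(1 - c) * B = 2 * D0 + c * r" using c_bounds unfolding B' by simp
  have B0: "B \<ge> 0" using c_bounds D00 r_pos unfolding B_def by simp
  have Bm0: "Bm \<ge> 0" unfolding Bm_def using B0 by simp
  have fin: "2 * D0 + c * Bm \<le> B"
  proof (cases "B \<ge> r")
    case True hence "Bm = B" unfolding Bm_def by simp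
    have eq: "B - c * B = 2 * D0 + c * r" using hB by (simp add: algebra_simps)
    have "c * r > 0" using c_bounds r_pos by simp
    hence "2 * D0 + c * B \<le> B" using eq by linarith
    thus ?thesis using \<open>Bm = B\<close> by simp
  next
    case False hence "Bm = r" unfolding Bm_def by simp
    have eq: "B - c * B = 2 * D0 + c * r" using hB by (simp add: algebra_simps)
    have "c * B \<ge> 0" using c_bounds B0 by simp
    hence "2 * D0 + c * r \<le> B" using eq by linarith
    thus ?thesis using \<open>Bm = r\<close> by simp
  qed
  have Q: "(\<forall>j\<in>{1..Suc m}. norm (x j - x 1) \<le> B) \<and> (norm (x (Suc m) - xstar))^2 \<le> D0^2 + Bm^2 * (\<Sum>l<m. a l)" for m
  proof (induction m)
    case 0
    have "norm (x 1 - xstar) = norm (xstar - x 1)" by (rule norm_minus_commute)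
    thus ?case using B0 by (simp add: D0_def)
  next
    case (Suc m)
    define k where "k = Suc m"
    have k1: "k \<ge> 1" unfolding k_def by simp
    have IH1: "\<forall>j\<in>{1..k}. norm (x j - x 1) \<le> B" using Suc k_def by simp
    have IH2: "(norm (x k - xstar))^2 \<le> D0^2 + Bm^2 * (\<Sum>l<m. a l)" using Suc k_def by simp
    have MaxB: "Max ((\<lambda>l. norm (x l - x 1)) ` {1..k}) \<le> B"
      using IH1 k1 by (subst Max_le_iff) auto
    have etak: "eta k = max r (Max ((\<lambda>l. norm (x l - x 1)) ` {1..k})) * eta_t k"
      using eta_def k1 by blast
    have etkp: "eta_t k > 0" using eta_t_pos k1 by blast
    have etap: "eta k > 0" using eta_pos k1 by blast
    have etaB: "eta k \<le> Bm * eta_t k"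
      unfolding etak Bm_def using MaxB etkp by (intro mult_right_mono) auto
    have eta2: "(eta k)^2 \<le> Bm^2 * (eta_t k)^2"
    proof -
      have "(eta k)^2 \<le> (Bm * eta_t k)^2" using etaB etap by (intro power_mono) auto
      thus ?thesis by (simp add: power_mult_distrib)
    qed
    have pD: "x (Suc k) \<in> D" using prox_step k1 by blast
    have xkD: "x k \<in> D" using prox_step x1_dom k1 k_def by (cases m) auto
    have mn: "\<forall>w\<in>D. real n * psi (x (Suc k)) + (1 / (2 * eta k)) * (norm (x (Suc k) - epoch_pt g (eta k) (sigma k) (x k) n))\<^sup>2
               \<le> real n * psi w + (1 / (2 * eta k)) * (norm (w - epoch_pt g (eta k) (sigma k) (x k) n))\<^sup>2"
      using prox_step k1 by blast
    have po: "real n * (psi (x (Suc k)) - psi xstar) \<le> (1 / eta k) * inner (x (Suc k) - epoch_pt g (eta k) (sigma k) (x k) n) (xstar - x (Suc k))"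
      by (rule prox_opt[OF psi_convex pD xstar_min(1) etap _ mn]) simp
    have ep: "(norm (xstar - x (Suc k)))^2 \<le> (norm (xstar - x k))^2 + 6 * (eta k)^2 * S^2
     - 2*eta k*((\<Sum>i=1..n. fs i (x (Suc k))) + real n * psi (x (Suc k)) - (\<Sum>i=1..n. fs i xstar) - real n * psi xstar)"
      unfolding S_def
      by (rule epoch_ineq[OF g_subgrad G_bound G_pos _ etap po]) (use sigma_perm k1 in blast)
    have Fopt: "(\<Sum>i=1..n. fs i xstar) + real n * psi xstar \<le> (\<Sum>i=1..n. fs i (x (Suc k))) + real n * psi (x (Suc k))"
    proof -
      have "(\<Sum>i=1..n. fs i xstar) / real n + psi xstar \<le> (\<Sum>i=1..n. fs i (x (Suc k))) / real n + psi (x (Suc k))"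
        using xstar_min(2) pD by blast
      hence "real n * ((\<Sum>i=1..n. fs i xstar) / real n + psi xstar) \<le> real n * ((\<Sum>i=1..n. fs i (x (Suc k))) / real n + psi (x (Suc k)))"
        using nr by (intro mult_left_mono) auto
      moreover have "real n * (X / real n + q) = X + real n * q" for X q
        using nr by (simp add: distrib_left)
      ultimately show ?thesis by (simp add: add.commute)
    qed
    have "2*eta k*((\<Sum>i=1..n. fs i (x (Suc k))) + real n * psi (x (Suc k)) - (\<Sum>i=1..n. fs i xstar) - real n * psi xstar) \<ge> 0"
      using Fopt etap by (intro mult_nonneg_nonneg) auto
    moreover have "norm (xstar - x (Suc k)) = norm (x (Suc k) - xstar)" by (rule norm_minus_commute)
    moreover have "norm (xstar - x k) = norm (x k - xstar)" by (rule norm_minus_commute)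
    ultimately have st: "(norm (x (Suc k) - xstar))^2 \<le> (norm (x k - xstar))^2 + 6 * (eta k)^2 * S^2"
      using ep by simp
    have "6 * (eta k)^2 * S^2 \<le> 6 * (Bm^2 * (eta_t k)^2) * S^2"
      using eta2 by (intro mult_right_mono mult_left_mono) auto
    also have "\<dots> = Bm^2 * a m" unfolding a_eq k_def by simp
    finally have st2: "(norm (x (Suc k) - xstar))^2 \<le> D0^2 + Bm^2 * (\<Sum>l<Suc m. a l)"
      using st IH2 by (simp add: algebra_simps)
    have "Bm^2 * (\<Sum>l<Suc m. a l) \<le> Bm^2 * c^2" by (intro mult_left_mono) (use asum[of "Suc m"] in simp_all)
    moreover have "(D0 + c * Bm)^2 = D0^2 + Bm^2 * c^2 + 2 * c * D0 * Bm"
      by (simp add: power2_eq_square algebra_simps)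
    moreover have "2 * c * D0 * Bm \<ge> 0" using D00 c_bounds Bm0 by simp
    ultimately have "(norm (x (Suc k) - xstar))^2 \<le> (D0 + c * Bm)^2"
      using st2 by linarith
    moreover have "0 \<le> D0 + c * Bm" using D00 c_bounds Bm0 by simp
    ultimately have nb: "norm (x (Suc k) - xstar) \<le> D0 + c * Bm"
      by (rule power2_le_imp_le)
    have "norm (x (Suc k) - x 1) \<le> norm (x (Suc k) - xstar) + norm (xstar - x 1)"
      using norm_triangle_ineq[of "x (Suc k) - xstar" "xstar - x 1"] by simp
    moreover have "norm (xstar - x 1) = D0" by (simp add: D0_def)
    ultimately have nk: "norm (x (Suc k) - x 1) \<le> B" using nb fin by linarith
    have all: "\<forall>j\<in>{1..Suc k}. norm (x j - x 1) \<le> B"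
    proof
      fix j assume "j \<in> {1..Suc k}"
      hence "j \<in> {1..k} \<or> j = Suc k" by auto
      thus "norm (x j - x 1) \<le> B" using IH1 nk by blast
    qed
    show ?case using all st2 unfolding k_def by blast
  qed
  show ?thesis
  proof (intro allI impI)
    fix k :: nat assume "k \<ge> 1"
    then obtain m where km: "k = Suc m" by (cases k) auto
    have "Suc m \<in> {1..Suc m}" by simp
    hence "norm (x (Suc m) - x 1) \<le> B" using Q[of m] by blast
    thus "norm (x k - x 1) \<le> 2 / (1 - c) * norm (xstar - x 1) + c / (1 - c) * r"
      unfolding km B_def D0_def .
  qed
qed

end
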